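(* Let $(I_t)_{t\in\mathbb{Z}}$ be a stochastic process such that there exists a family $(I_t^n)_{t\in\mathbb{Z}}$, $n\in\mathbb{N}$, of $\{0,1\}$-valued stationary stochastic processes with $P(I_0^n=1)>0$ for all $n$ and $$\mathcal{L}\bigl((I_t^n)_{t\in\{-u,\dots,v\}}\mid I_0^n=1\bigr)\Longrightarrow \mathcal{L}\bigl((I_t)_{t\in\{-u,\dots,v\}}\bigr)\quad (n\to\infty)$$ for all $u,v\in\mathbb{N}$. Define $S_+^i=\sum_{t=1}^\infty I_t$ and $S_-^i=\sum_{t=1}^\infty I_{-t}$ (values in $\mathbb{N}_0\cup\{\infty\}$). (a) The law of $(S_-^i,S_+^i)$ is symmetric (in particular $S_-^i$ and $S_+^i$ have the same distribution; let $S^i_{\pm}$ denote a random variable with this common distribution), and for all $k,\ell\in\mathbb{N}_0$, $$P(S_+^i=k,\ S_-^i\ge \ell)=P(S^i_{\pm}=k+\ell),$$ $$P(S_+^i=k,\ S_-^i=\ell)=P(S^i_{\pm}=k+\ell)-P(S^i_{\pm}=k+\ell+1).$$ (b) The common probability mass function of $S_-^i$ and $S_+^i$ is nonincreasing on $\mathbb{N}_0$: $P(S^i_{\pm}=k)\ge P(S^i_{\pm}=k+1)$ for all $k\in\mathbb{N}_0$.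
   Context: $\mathbb{N}_0=\{0,1,2,\dots\}$. $\mathcal{L}(\cdot\mid\cdot)$ denotes conditional law and $\Longrightarrow$ convergence in distribution. *)

theory Defs
  imports "HOL-Probability.Probability"
begin

definition path_space :: "(int \<Rightarrow> nat) measure" where
  "path_space = PiM UNIV (\<lambda>_. count_space UNIV)"

definition stationary_process :: "'a measure \<Rightarrow> ('a \<Rightarrow> int \<Rightarrow> nat) \<Rightarrow> bool" where
  "stationary_process M X \<longleftrightarrow>
     (\<forall>t. (\<lambda>\<omega>. X \<omega> t) \<in> measurable M (count_space UNIV)) \<and>
     (\<forall>s. distr M path_space (\<lambda>\<omega> t. X \<omega> (t + s)) = distr M path_space X)"

definition S_plus :: "(int \<Rightarrow> nat) \<Rightarrow> enat" where
  "S_plus x = (\<Sum>t. enat (x (int t + 1)))"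

definition S_minus :: "(int \<Rightarrow> nat) \<Rightarrow> enat" where
  "S_minus x = (\<Sum>t. enat (x (- (int t + 1))))"

end

theory Submission
  imports Defs
begin

lemma sum_enat: "(\<Sum>i<(n::nat). enat (g i)) = enat (\<Sum>i<n. g i)"
  by (induction n) (auto simp: zero_enat_def)

lemma enat_suminf_SUP: "(\<Sum>i. enat (g i)) = (SUP n. enat (\<Sum>i<n. g i))"
  by (simp add: suminf_eq_SUP sum_enat)

lemma S_le: "(\<Sum>i. enat (g i)) \<le> enat m \<longleftrightarrow> (\<forall>n. (\<Sum>i<n. g i) \<le> m)"
  by (simp add: enat_suminf_SUP SUP_le_iff)

lemma S_ge: "enat m \<le> (\<Sum>i. enat (g i)) \<longleftrightarrow> (\<exists>n. m \<le> (\<Sum>i<n. g i))"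
proof (cases m)
  case 0 then show ?thesis by (simp add: zero_enat_def[symmetric])
next
  case (Suc m')
  have "enat m \<le> (\<Sum>i. enat (g i)) \<longleftrightarrow> \<not> (\<Sum>i. enat (g i)) \<le> enat m'"
    using Suc by (metis Suc_ile_eq not_le)
  then show ?thesis using Suc by (auto simp: S_le not_le Suc_le_eq)
qed


lemma cross:
  fixes g :: "nat \<Rightarrow> nat"
  assumes g: "\<And>i. g i \<le> 1" and l: "1 \<le> l" and n: "l \<le> (\<Sum>i<n. g i)"
  shows "\<exists>j. g j = 1 \<and> (\<Sum>i<j. g i) = l - 1"
  using n
proof (induction n)
  case 0 then show ?case using l by simp
next
  case (Suc n)
  show ?case
  proof (cases "l \<le> (\<Sum>i<n. g i)")
    case True then show ?thesis using Suc.IH by blast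
  next
    case False
    have "g n \<le> 1" by (rule g)
    with False Suc.prems have "g n = 1 \<and> (\<Sum>i<n. g i) = l - 1" by simp
    then show ?thesis by blast
  qed
qed

lemma uniq:
  fixes g :: "nat \<Rightarrow> nat"
  assumes "g j = 1" "g j' = 1" "(\<Sum>i<j. g i) = (\<Sum>i<j'. g i)"
  shows "j = j'"
proof (rule ccontr)
  assume "j \<noteq> j'"
  then consider "j < j'" | "j' < j" by linarith
  then show False
  proof cases
    case 1
    have "(\<Sum>i<Suc j. g i) \<le> (\<Sum>i<j'. g i)" using 1 by (intro sum_mono2) auto
    then show False using assms by simp
  next
    case 2
    have "(\<Sum>i<Suc j'. g i) \<le> (\<Sum>i<j. g i)" using 2 by (intro sum_mono2) auto
    then show False using assms by simp
  qed
qed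

lemma sum_split: "(\<Sum>i<m+v. g i) = (\<Sum>i<m. g i) + (\<Sum>i<v. g (m+i))" for g :: "nat \<Rightarrow> nat"
  by (induction v) auto

lemma CL_L:
  fixes g :: "nat \<Rightarrow> nat"
  assumes g: "\<And>i. g i \<le> 1" and l: "1 \<le> l"
  shows "(\<exists>j. g j = 1 \<and> (\<Sum>i<j. g i) = l - 1) \<longleftrightarrow> enat l \<le> (\<Sum>i. enat (g i))"
proof
  assume "\<exists>j. g j = 1 \<and> (\<Sum>i<j. g i) = l - 1"
  then obtain j where j: "g j = 1" "(\<Sum>i<j. g i) = l - 1" by blast
  have "l \<le> (\<Sum>i<Suc j. g i)" using j l by simp
  then show "enat l \<le> (\<Sum>i. enat (g i))" unfolding S_ge by blast
next
  assume "enat l \<le> (\<Sum>i. enat (g i))"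
  then obtain n where "l \<le> (\<Sum>i<n. g i)" unfolding S_ge by blast
  then show "\<exists>j. g j = 1 \<and> (\<Sum>i<j. g i) = l - 1" using cross[of g l n] g l by blast
qed

lemma CL_R:
  fixes g :: "nat \<Rightarrow> nat"
  assumes g: "\<And>i. g i \<le> 1" and l: "1 \<le> l"
  shows "(\<exists>j. g j = 1 \<and> (\<Sum>i<j. g i) = l - 1 \<and> (\<forall>v. (\<Sum>i<v. g (j+1+i)) \<le> k))
     \<longleftrightarrow> enat l \<le> (\<Sum>i. enat (g i)) \<and> (\<Sum>i. enat (g i)) \<le> enat (k + l)"
proof
  assume "\<exists>j. g j = 1 \<and> (\<Sum>i<j. g i) = l - 1 \<and> (\<forall>v. (\<Sum>i<v. g (j+1+i)) \<le> k)"
  then obtain j where j: "g j = 1" "(\<Sum>i<j. g i) = l - 1" "\<forall>v. (\<Sum>i<v. g (j+1+i)) \<le> k" by blast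
  have jl: "(\<Sum>i<j+1. g i) = l" using j l by simp
  have "l \<le> (\<Sum>i<Suc j. g i)" using j l by simp
  then have A: "enat l \<le> (\<Sum>i. enat (g i))" unfolding S_ge by blast
  have "(\<Sum>i<n. g i) \<le> k + l" for n
  proof (cases "n \<le> j + 1")
    case True
    then have "(\<Sum>i<n. g i) \<le> (\<Sum>i<j+1. g i)" by (intro sum_mono2) auto
    then show ?thesis using jl by simp
  next
    case False
    then obtain v where "n = j + 1 + v" by (metis le_add_diff_inverse nat_le_linear)
    then show ?thesis using sum_split[of g "j+1" v] jl j(3) by simp
  qed
  then show "enat l \<le> (\<Sum>i. enat (g i)) \<and> (\<Sum>i. enat (g i)) \<le> enat (k + l)"
    using A unfolding S_le by blast
next
  assume as: "enat l \<le> (\<Sum>i. enat (g i)) \<and> (\<Sum>i. enat (g i)) \<le> enat (k + l)"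
  then obtain n where "l \<le> (\<Sum>i<n. g i)" unfolding S_ge by blast
  then obtain j where j: "g j = 1" "(\<Sum>i<j. g i) = l - 1" using cross[of g l n] g l by blast
  have jl: "(\<Sum>i<j+1. g i) = l" using j l by simp
  have "(\<Sum>i<v. g (j+1+i)) \<le> k" for v
    using sum_split[of g "j+1" v] jl as unfolding S_le by (metis add_le_cancel_left add.commute)
  then show "\<exists>j. g j = 1 \<and> (\<Sum>i<j. g i) = l - 1 \<and> (\<forall>v. (\<Sum>i<v. g (j+1+i)) \<le> k)"
    using j by blast
qed


definition pats :: "int set \<Rightarrow> ((int \<Rightarrow> nat) \<Rightarrow> bool) \<Rightarrow> (int \<Rightarrow> nat) set" where
  "pats W \<Phi> = {x. (\<forall>t. t \<notin> W \<longrightarrow> x t = 0) \<and> \<Phi> x}"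

lemma pats_finite:
  assumes W: "finite W" and bnd: "\<And>f t. \<Phi> f \<Longrightarrow> t \<in> W \<Longrightarrow> f t \<le> 1"
  shows "finite (pats W \<Phi>)"
proof -
  have "pats W \<Phi> \<subseteq> (\<lambda>h t. if t \<in> W then h t else 0) ` PiE W (\<lambda>_. {0..1::nat})"
  proof
    fix x assume x: "x \<in> pats W \<Phi>"
    have "x = (\<lambda>t. if t \<in> W then restrict x W t else 0)"
      using x by (auto simp: pats_def)
    moreover have "restrict x W \<in> PiE W (\<lambda>_. {0..1::nat})"
      using x bnd by (auto simp: pats_def)
    ultimately show "x \<in> (\<lambda>h t. if t \<in> W then h t else 0) ` PiE W (\<lambda>_. {0..1::nat})"
      by blast
  qed
  moreover have "finite (PiE W (\<lambda>_. {0..1::nat}))" using W by (intro finite_PiE) auto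
  ultimately show ?thesis by (meson finite_imageI finite_subset)
qed

lemma decomp:
  assumes P: "finite_measure P"
    and X: "\<And>t. (\<lambda>\<omega>. X \<omega> t) \<in> measurable P (count_space UNIV)"
    and W: "finite W"
    and dep: "\<And>f g. (\<forall>t\<in>W. f t = g t) \<Longrightarrow> \<Phi> f = \<Phi> g"
    and bnd: "\<And>f t. \<Phi> f \<Longrightarrow> t \<in> W \<Longrightarrow> f t \<le> 1"
  shows "measure P {\<omega>\<in>space P. \<Phi> (X \<omega>)} =
    (\<Sum>x\<in>pats W \<Phi>. measure P {\<omega>\<in>space P. \<forall>t\<in>W. X \<omega> t = x t})"
proof -
  let ?A = "\<lambda>x. {\<omega>\<in>space P. \<forall>t\<in>W. X \<omega> t = x t}"
  have eq: "{\<omega>\<in>space P. \<Phi> (X \<omega>)} = (\<Union>x\<in>pats W \<Phi>. ?A x)"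
  proof
    show "{\<omega>\<in>space P. \<Phi> (X \<omega>)} \<subseteq> (\<Union>x\<in>pats W \<Phi>. ?A x)"
    proof
      fix \<omega> assume "\<omega> \<in> {\<omega>\<in>space P. \<Phi> (X \<omega>)}"
      then have \<omega>: "\<omega> \<in> space P" "\<Phi> (X \<omega>)" by auto
      let ?x = "\<lambda>t. if t \<in> W then X \<omega> t else 0"
      have "\<Phi> ?x = \<Phi> (X \<omega>)" by (rule dep) auto
      then have "?x \<in> pats W \<Phi>" using \<omega> by (auto simp: pats_def)
      moreover have "\<omega> \<in> ?A ?x" using \<omega> by auto
      ultimately show "\<omega> \<in> (\<Union>x\<in>pats W \<Phi>. ?A x)" by blast
    qed
    show "(\<Union>x\<in>pats W \<Phi>. ?A x) \<subseteq> {\<omega>\<in>space P. \<Phi> (X \<omega>)}"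
    proof
      fix \<omega> assume "\<omega> \<in> (\<Union>x\<in>pats W \<Phi>. ?A x)"
      then obtain x where "x \<in> pats W \<Phi>" "\<omega> \<in> ?A x" by blast
      then show "\<omega> \<in> {\<omega>\<in>space P. \<Phi> (X \<omega>)}" using dep[of "X \<omega>" x] by (auto simp: pats_def)
    qed
  qed
  have meas: "?A x \<in> sets P" for x
  proof -
    note X[measurable] W[measurable]
    show ?thesis by measurable
  qed
  have disj: "disjoint_family_on ?A (pats W \<Phi>)"
    unfolding disjoint_family_on_def
  proof (intro ballI impI)
    fix x y assume xy: "x \<in> pats W \<Phi>" "y \<in> pats W \<Phi>" "x \<noteq> y"
    then obtain t where "x t \<noteq> y t" by auto
    with xy have "t \<in> W" by (auto simp: pats_def)
    with \<open>x t \<noteq> y t\<close> show "?A x \<inter> ?A y = {}" by auto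
  qed
  have fin: "finite (pats W \<Phi>)" by (rule pats_finite) (use W bnd in auto)
  show ?thesis
    unfolding eq
    by (rule finite_measure.finite_measure_finite_Union[OF P fin])
       (use meas disj in auto)
qed


definition palm :: "'a measure \<Rightarrow> ('a \<Rightarrow> int \<Rightarrow> nat) \<Rightarrow> bool" where
  "palm M I \<longleftrightarrow> (\<forall>a b s x. a \<le> 0 \<longrightarrow> 0 \<le> b \<longrightarrow> a \<le> s \<longrightarrow> s \<le> b \<longrightarrow> x 0 = 1 \<longrightarrow> x s = 1 \<longrightarrow>
     measure M {\<omega>\<in>space M. \<forall>t\<in>{a..b}. I \<omega> t = x t} =
     measure M {\<omega>\<in>space M. \<forall>t\<in>{a..b}. I \<omega> (t - s) = x t})"

lemma palm_event:
  assumes P: "finite_measure M"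
    and X: "\<And>t. (\<lambda>\<omega>. I \<omega> t) \<in> measurable M (count_space UNIV)"
    and pm: "palm M I"
    and ab: "a \<le> 0" "0 \<le> b" "a \<le> s" "s \<le> b"
    and dep: "\<And>f g. (\<forall>t\<in>{a..b}. f t = g t) \<Longrightarrow> \<Phi> f = \<Phi> g"
    and bnd: "\<And>f t. \<Phi> f \<Longrightarrow> t \<in> {a..b} \<Longrightarrow> f t \<le> 1"
    and one: "\<And>f. \<Phi> f \<Longrightarrow> f 0 = 1 \<and> f s = 1"
  shows "measure M {\<omega>\<in>space M. \<Phi> (I \<omega>)} = measure M {\<omega>\<in>space M. \<Phi> (\<lambda>t. I \<omega> (t - s))}"
proof -
  have X2: "(\<lambda>\<omega>. I \<omega> (t - s)) \<in> measurable M (count_space UNIV)" for t using X .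
  have "measure M {\<omega>\<in>space M. \<Phi> (I \<omega>)} =
    (\<Sum>x\<in>pats {a..b} \<Phi>. measure M {\<omega>\<in>space M. \<forall>t\<in>{a..b}. I \<omega> t = x t})"
    by (rule decomp[OF P X]) (use dep bnd in auto)
  also have "\<dots> = (\<Sum>x\<in>pats {a..b} \<Phi>. measure M {\<omega>\<in>space M. \<forall>t\<in>{a..b}. I \<omega> (t - s) = x t})"
  proof (rule sum.cong)
    fix x assume "x \<in> pats {a..b} \<Phi>"
    then have "x 0 = 1" "x s = 1" using one by (auto simp: pats_def)
    then show "measure M {\<omega>\<in>space M. \<forall>t\<in>{a..b}. I \<omega> t = x t} =
      measure M {\<omega>\<in>space M. \<forall>t\<in>{a..b}. I \<omega> (t - s) = x t}"
      using pm ab unfolding palm_def by blast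
  qed simp
  also have "\<dots> = measure M {\<omega>\<in>space M. \<Phi> (\<lambda>t. I \<omega> (t - s))}"
    by (rule decomp[OF P X2, symmetric]) (use dep bnd in auto)
  finally show ?thesis .
qed

lemma all_neg_int: "(\<forall>t\<in>{a..b::int}. P (- t)) \<longleftrightarrow> (\<forall>t\<in>{-b..-a}. P t)"
proof
  assume H: "\<forall>t\<in>{a..b}. P (- t)"
  show "\<forall>t\<in>{-b..-a}. P t"
  proof
    fix t assume "t \<in> {-b..-a}"
    then have "- t \<in> {a..b}" by auto
    then have "P (- (- t))" using H by blast
    then show "P t" by simp
  qed
next
  assume H: "\<forall>t\<in>{-b..-a}. P t"
  show "\<forall>t\<in>{a..b}. P (- t)"
  proof
    fix t assume "t \<in> {a..b}"
    then have "- t \<in> {-b..-a}" by auto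
    then show "P (- t)" using H by blast
  qed
qed

lemma palm_refl:
  assumes pm: "palm M I"
  shows "palm M (\<lambda>\<omega> t. I \<omega> (- t))"
  unfolding palm_def
proof (intro allI impI)
  fix a b s :: int and x :: "int \<Rightarrow> nat"
  assume h: "a \<le> 0" "0 \<le> b" "a \<le> s" "s \<le> b" "x 0 = 1" "x s = 1"
  let ?y = "\<lambda>t. x (- t)"
  have "measure M {\<omega>\<in>space M. \<forall>t\<in>{-b..-a}. I \<omega> t = ?y t} =
     measure M {\<omega>\<in>space M. \<forall>t\<in>{-b..-a}. I \<omega> (t - (-s)) = ?y t}"
  proof -
    have inst: "\<And>a b s x. a \<le> 0 \<Longrightarrow> 0 \<le> b \<Longrightarrow> a \<le> s \<Longrightarrow> s \<le> b \<Longrightarrow> x 0 = 1 \<Longrightarrow> x s = 1 \<Longrightarrow>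
     measure M {\<omega>\<in>space M. \<forall>t\<in>{a..b}. I \<omega> t = x t} =
     measure M {\<omega>\<in>space M. \<forall>t\<in>{a..b}. I \<omega> (t - s) = x t}"
      using pm unfolding palm_def by blast
    show ?thesis by (rule inst) (use h in auto)
  qed
  moreover have "{\<omega>\<in>space M. \<forall>t\<in>{a..b}. I \<omega> (- t) = x t} = {\<omega>\<in>space M. \<forall>t\<in>{-b..-a}. I \<omega> t = ?y t}"
    using all_neg_int[of a b "\<lambda>t. I _ t = x (- t)"] by simp
  moreover have "{\<omega>\<in>space M. \<forall>t\<in>{a..b}. I \<omega> (- (t - s)) = x t} = {\<omega>\<in>space M. \<forall>t\<in>{-b..-a}. I \<omega> (t - (-s)) = ?y t}"
    using all_neg_int[of a b "\<lambda>t. I _ (t + s) = x (- t)"] by (simp add: algebra_simps)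
  ultimately show "measure M {\<omega>\<in>space M. \<forall>t\<in>{a..b}. I \<omega> (- t) = x t} =
     measure M {\<omega>\<in>space M. \<forall>t\<in>{a..b}. I \<omega> (- (t - s)) = x t}" by simp
qed


lemma S_plus_le: "S_plus x \<le> enat m \<longleftrightarrow> (\<forall>n. (\<Sum>i<n. x (int i + 1)) \<le> m)"
  unfolding S_plus_def by (rule S_le)

lemma S_plus_ge: "enat m \<le> S_plus x \<longleftrightarrow> (\<exists>n. m \<le> (\<Sum>i<n. x (int i + 1)))"
  unfolding S_plus_def by (rule S_ge)

lemma S_minus_refl: "S_minus x = S_plus (\<lambda>t. x (- t))"
  by (simp add: S_minus_def S_plus_def)

lemma S_plus_refl: "S_plus x = S_minus (\<lambda>t. x (- t))"
  by (simp add: S_minus_def S_plus_def add.commute)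

lemma enat_inf_iff: "e = \<infinity> \<longleftrightarrow> (\<forall>m. \<not> e \<le> enat m)"
  by (cases e) auto

lemma S_plus_meas:
  assumes X[measurable]: "\<And>t. (\<lambda>\<omega>. X \<omega> t) \<in> measurable M (count_space UNIV)"
  shows "(\<lambda>\<omega>. S_plus (X \<omega>)) \<in> measurable M (count_space UNIV)"
  unfolding measurable_count_space_eq2_countable
proof (intro conjI ballI)
  fix e :: enat
  show "(\<lambda>\<omega>. S_plus (X \<omega>)) -` {e} \<inter> space M \<in> sets M"
  proof (cases e)
    case (enat m)
    have "(\<lambda>\<omega>. S_plus (X \<omega>)) -` {e} \<inter> space M =
      {\<omega>\<in>space M. (\<forall>n. (\<Sum>i<n. X \<omega> (int i + 1)) \<le> m) \<and> (\<exists>n. m \<le> (\<Sum>i<n. X \<omega> (int i + 1)))}"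
      using enat by (auto simp: S_plus_le[symmetric] S_plus_ge[symmetric] antisym)
    also have "\<dots> \<in> sets M" by measurable
    finally show ?thesis .
  next
    case infinity
    have "(\<lambda>\<omega>. S_plus (X \<omega>)) -` {e} \<inter> space M =
      {\<omega>\<in>space M. \<forall>m. \<not> (\<forall>n. (\<Sum>i<n. X \<omega> (int i + 1)) \<le> m)}"
      using infinity by (auto simp: S_plus_le[symmetric] enat_inf_iff[symmetric] simp del: not_all)
    also have "\<dots> \<in> sets M" by measurable
    finally show ?thesis .
  qed
qed auto

lemma S_minus_meas:
  assumes X[measurable]: "\<And>t. (\<lambda>\<omega>. X \<omega> t) \<in> measurable M (count_space UNIV)"
  shows "(\<lambda>\<omega>. S_minus (X \<omega>)) \<in> measurable M (count_space UNIV)"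
  unfolding S_minus_refl by (rule S_plus_meas) (use X in simp)

lemma sum_rev_int: "(\<Sum>i<j. h (int j - int i)) = (\<Sum>i<j. h (int i + 1))"
proof -
  have "(\<Sum>i<j. h (int j - int i)) = (\<Sum>i<j. (\<lambda>i. h (int i + 1)) (j - Suc i))"
    by (intro sum.cong) (auto simp: of_nat_diff)
  also have "\<dots> = (\<Sum>i<j. h (int i + 1))" by (rule sum.nat_diff_reindex)
  finally show ?thesis .
qed

lemma enat_Suc_split: "(e \<le> enat (Suc k) \<and> \<not> e \<le> enat k) \<longleftrightarrow> e = enat (Suc k)"
  by (cases e) auto


lemma core_key:
  assumes M: "prob_space M"
    and X[measurable]: "\<And>t. (\<lambda>\<omega>. I \<omega> t) \<in> measurable M (count_space UNIV)"
    and pm: "palm M I"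
    and good: "AE \<omega> in M. I \<omega> 0 = 1 \<and> (\<forall>t. I \<omega> t \<le> 1)"
    and l: "1 \<le> l"
  shows "measure M {\<omega>\<in>space M. S_plus (I \<omega>) \<le> enat k \<and> enat l \<le> S_minus (I \<omega>)} =
         measure M {\<omega>\<in>space M. enat l \<le> S_plus (I \<omega>) \<and> S_plus (I \<omega>) \<le> enat (k + l)}"
proof -
  interpret prob_space M by (rule M)
  have fin: "finite_measure M" by (rule finite_measure_axioms)
  define Lv where "Lv = (\<lambda>j v. {\<omega>\<in>space M. I \<omega> (-(int j+1)) = 1 \<and> (\<Sum>i<j. I \<omega> (-(int i+1))) = l-1
      \<and> (\<Sum>i<v. I \<omega> (int i+1)) \<le> k})"
  define Rv where "Rv = (\<lambda>j v. {\<omega>\<in>space M. I \<omega> (int j+1) = 1 \<and> (\<Sum>i<j. I \<omega> (int i+1)) = l-1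
      \<and> (\<Sum>i<v. I \<omega> (int (j+1+i)+1)) \<le> k})"
  have Lv_meas[measurable]: "Lv j v \<in> sets M" for j v unfolding Lv_def by measurable
  have Rv_meas[measurable]: "Rv j v \<in> sets M" for j v unfolding Rv_def by measurable
  have step1: "measure M (Lv j v) = measure M (Rv j v)" for j v
  proof -
    let ?W = "{-(int j+1)..int v}"
    define \<Phi> where "\<Phi> = (\<lambda>f::int\<Rightarrow>nat. f 0 = 1 \<and> (\<forall>t\<in>?W. f t \<le> 1) \<and> f (-(int j+1)) = 1
       \<and> (\<Sum>i<j. f (-(int i+1))) = l-1 \<and> (\<Sum>i<v. f (int i+1)) \<le> k)"
    have pe: "measure M {\<omega>\<in>space M. \<Phi> (I \<omega>)} = measure M {\<omega>\<in>space M. \<Phi> (\<lambda>t. I \<omega> (t - (-(int j+1))))}"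
    proof (rule palm_event[OF fin X pm])
      fix f g :: "int \<Rightarrow> nat" assume fg: "\<forall>t\<in>?W. f t = g t"
      have 1: "(\<Sum>i<j. f (-(int i+1))) = (\<Sum>i<j. g (-(int i+1)))" using fg by (intro sum.cong) auto
      have 2: "(\<Sum>i<v. f (int i+1)) = (\<Sum>i<v. g (int i+1))" using fg by (intro sum.cong) auto
      have 3: "f 0 = g 0" "f (-(int j+1)) = g (-(int j+1))" using fg by auto
      show "\<Phi> f = \<Phi> g" unfolding \<Phi>_def using fg 1 2 3 by auto
    next
      fix f t assume "\<Phi> f" "t \<in> ?W" then show "f t \<le> 1" by (auto simp: \<Phi>_def)
    next
      fix f assume "\<Phi> f" then show "f 0 = 1 \<and> f (-(int j+1)) = 1" by (simp add: \<Phi>_def)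
    qed auto
    have "measure M (Lv j v) = measure M {\<omega>\<in>space M. \<Phi> (I \<omega>)}"
    proof (rule measure_eq_AE)
      show "AE \<omega> in M. \<omega> \<in> Lv j v \<longleftrightarrow> \<omega> \<in> {\<omega>\<in>space M. \<Phi> (I \<omega>)}"
        using good by eventually_elim (auto simp: \<Phi>_def Lv_def)
      show "{\<omega>\<in>space M. \<Phi> (I \<omega>)} \<in> sets M" unfolding \<Phi>_def by measurable
    qed measurable
    also note pe
    also have "measure M {\<omega>\<in>space M. \<Phi> (\<lambda>t. I \<omega> (t - (-(int j+1))))} = measure M (Rv j v)"
    proof (rule measure_eq_AE)
      have e1: "(\<Sum>i<j. I \<omega> (-(int i+1) - (-(int j+1)))) = (\<Sum>i<j. I \<omega> (int i + 1))" for \<omega>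
      proof -
        have "(\<Sum>i<j. I \<omega> (-(int i+1) - (-(int j+1)))) = (\<Sum>i<j. I \<omega> (int j - int i))"
          by (intro sum.cong) (auto simp: algebra_simps)
        then show ?thesis using sum_rev_int[of "I \<omega>" j] by simp
      qed
      have e2: "(\<Sum>i<v. I \<omega> (int i + 1 - (-(int j+1)))) = (\<Sum>i<v. I \<omega> (int (j+1+i)+1))" for \<omega>
        by (intro sum.cong) (auto simp: algebra_simps)
      have e3: "\<Phi> (\<lambda>t. I \<omega> (t - (-(int j+1)))) \<longleftrightarrow>
         I \<omega> (int j + 1) = 1 \<and> (\<forall>t\<in>?W. I \<omega> (t - (-(int j+1))) \<le> 1) \<and> I \<omega> 0 = 1
          \<and> (\<Sum>i<j. I \<omega> (int i + 1)) = l-1 \<and> (\<Sum>i<v. I \<omega> (int (j+1+i)+1)) \<le> k" for \<omega>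
        unfolding \<Phi>_def e1[symmetric] e2[symmetric] by (simp add: ac_simps)
      show "AE \<omega> in M. \<omega> \<in> {\<omega>\<in>space M. \<Phi> (\<lambda>t. I \<omega> (t - (-(int j+1))))} \<longleftrightarrow> \<omega> \<in> Rv j v"
        using good by eventually_elim (unfold mem_Collect_eq e3 Rv_def, auto)
      show "{\<omega>\<in>space M. \<Phi> (\<lambda>t. I \<omega> (t - (-(int j+1))))} \<in> sets M" unfolding \<Phi>_def by measurable
    qed measurable
    finally show ?thesis .
  qed
  define Lj where "Lj = (\<lambda>j. \<Inter>v. Lv j v)"
  define Rj where "Rj = (\<lambda>j. \<Inter>v. Rv j v)"
  have Lj_meas[measurable]: "Lj j \<in> sets M" for j unfolding Lj_def by measurable
  have Rj_meas[measurable]: "Rj j \<in> sets M" for j unfolding Rj_def by measurable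
  have psmono: "(\<Sum>i<m. f i) \<le> (\<Sum>i<n. f i)" if "m \<le> n" for f :: "nat \<Rightarrow> nat" and m n
    by (rule sum_mono2) (use that in auto)
  have step2: "measure M (Lj j) = measure M (Rj j)" for j
  proof -
    have decL: "decseq (Lv j)" unfolding decseq_def Lv_def
      using psmono order_trans by blast
    have decR: "decseq (Rv j)" unfolding decseq_def Rv_def
      using psmono order_trans by blast
    have "(\<lambda>v. measure M (Lv j v)) \<longlonglongrightarrow> measure M (\<Inter>(range (Lv j)))"
      by (rule finite_measure.finite_Lim_measure_decseq[OF fin _ decL]) auto
    moreover have "(\<lambda>v. measure M (Lv j v)) \<longlonglongrightarrow> measure M (\<Inter>(range (Rv j)))"
      unfolding step1 by (rule finite_measure.finite_Lim_measure_decseq[OF fin _ decR]) auto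
    ultimately show ?thesis unfolding Lj_def Rj_def by (rule LIMSEQ_unique)
  qed
  have memL: "\<omega> \<in> Lj j \<longleftrightarrow> \<omega> \<in> space M \<and> I \<omega> (-(int j+1)) = 1 \<and> (\<Sum>i<j. I \<omega> (-(int i+1))) = l-1
      \<and> S_plus (I \<omega>) \<le> enat k" for \<omega> j
    unfolding Lj_def Lv_def S_plus_le by auto
  have memR: "\<omega> \<in> Rj j \<longleftrightarrow> \<omega> \<in> space M \<and> I \<omega> (int j+1) = 1 \<and> (\<Sum>i<j. I \<omega> (int i+1)) = l-1
      \<and> (\<forall>v. (\<Sum>i<v. I \<omega> (int (j+1+i)+1)) \<le> k)" for \<omega> j
    unfolding Rj_def Rv_def by auto
  have disjL: "disjoint_family Lj"
    unfolding disjoint_family_on_def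
  proof (intro ballI impI)
    fix m n :: nat assume "m \<noteq> n"
    show "Lj m \<inter> Lj n = {}"
    proof (rule ccontr)
      assume "Lj m \<inter> Lj n \<noteq> {}"
      then obtain \<omega> where "\<omega> \<in> Lj m" "\<omega> \<in> Lj n" by blast
      then have "m = n" using uniq[of "\<lambda>i. I \<omega> (-(int i+1))" m n] unfolding memL by auto
      with \<open>m \<noteq> n\<close> show False by simp
    qed
  qed
  have disjR: "disjoint_family Rj"
    unfolding disjoint_family_on_def
  proof (intro ballI impI)
    fix m n :: nat assume "m \<noteq> n"
    show "Rj m \<inter> Rj n = {}"
    proof (rule ccontr)
      assume "Rj m \<inter> Rj n \<noteq> {}"
      then obtain \<omega> where "\<omega> \<in> Rj m" "\<omega> \<in> Rj n" by blast
      then have "m = n" using uniq[of "\<lambda>i. I \<omega> (int i+1)" m n] unfolding memR by auto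
      with \<open>m \<noteq> n\<close> show False by simp
    qed
  qed
  have sL: "(\<lambda>j. measure M (Lj j)) sums measure M (\<Union>(range Lj))"
    by (rule finite_measure.finite_measure_UNION[OF fin _ disjL]) auto
  have sR: "(\<lambda>j. measure M (Rj j)) sums measure M (\<Union>(range Rj))"
    by (rule finite_measure.finite_measure_UNION[OF fin _ disjR]) auto
  have U: "measure M (\<Union>(range Lj)) = measure M (\<Union>(range Rj))"
    using sL sR unfolding step2 using sums_unique2 by blast
  have "measure M {\<omega>\<in>space M. S_plus (I \<omega>) \<le> enat k \<and> enat l \<le> S_minus (I \<omega>)} = measure M (\<Union>(range Lj))"
  proof (rule measure_eq_AE)
    show "AE \<omega> in M. \<omega> \<in> {\<omega>\<in>space M. S_plus (I \<omega>) \<le> enat k \<and> enat l \<le> S_minus (I \<omega>)} \<longleftrightarrow> \<omega> \<in> \<Union>(range Lj)"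
      using good
    proof eventually_elim
      case (elim \<omega>)
      have "(\<exists>j. I \<omega> (-(int j+1)) = 1 \<and> (\<Sum>i<j. I \<omega> (-(int i+1))) = l - 1) \<longleftrightarrow> enat l \<le> S_minus (I \<omega>)"
        unfolding S_minus_def using CL_L[of "\<lambda>i. I \<omega> (-(int i+1))" l] elim l by auto
      then show ?case using memL by auto
    qed
    show "{\<omega>\<in>space M. S_plus (I \<omega>) \<le> enat k \<and> enat l \<le> S_minus (I \<omega>)} \<in> sets M"
      using S_plus_meas[OF X] S_minus_meas[OF X] by measurable
  qed measurable
  also note U
  also have "measure M (\<Union>(range Rj)) = measure M {\<omega>\<in>space M. enat l \<le> S_plus (I \<omega>) \<and> S_plus (I \<omega>) \<le> enat (k + l)}"
  proof (rule measure_eq_AE)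
    show "AE \<omega> in M. \<omega> \<in> \<Union>(range Rj) \<longleftrightarrow> \<omega> \<in> {\<omega>\<in>space M. enat l \<le> S_plus (I \<omega>) \<and> S_plus (I \<omega>) \<le> enat (k + l)}"
      using good
    proof eventually_elim
      case (elim \<omega>)
      have "(\<exists>j. I \<omega> (int j+1) = 1 \<and> (\<Sum>i<j. I \<omega> (int i+1)) = l - 1 \<and> (\<forall>v. (\<Sum>i<v. I \<omega> (int (j+1+i)+1)) \<le> k))
         \<longleftrightarrow> enat l \<le> S_plus (I \<omega>) \<and> S_plus (I \<omega>) \<le> enat (k + l)"
        unfolding S_plus_def using CL_R[of "\<lambda>i. I \<omega> (int i+1)" l k] elim l by auto
      then show ?case using memR by auto
    qed
    show "{\<omega>\<in>space M. enat l \<le> S_plus (I \<omega>) \<and> S_plus (I \<omega>) \<le> enat (k + l)} \<in> sets M"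
      using S_plus_meas[OF X] by measurable
  qed measurable
  finally show ?thesis .
qed


lemma core_P1:
  assumes M: "prob_space M"
    and X[measurable]: "\<And>t. (\<lambda>\<omega>. I \<omega> t) \<in> measurable M (count_space UNIV)"
    and pm: "palm M I"
    and good: "AE \<omega> in M. I \<omega> 0 = 1 \<and> (\<forall>t. I \<omega> t \<le> 1)"
  shows "measure M {\<omega>\<in>space M. S_plus (I \<omega>) = enat k \<and> S_minus (I \<omega>) \<ge> enat l} =
         measure M {\<omega>\<in>space M. S_plus (I \<omega>) = enat (k + l)}"
proof (cases "l = 0")
  case True
  then show ?thesis by (simp add: zero_enat_def[symmetric])
next
  case False
  then have l: "1 \<le> l" by simp
  interpret prob_space M by (rule M)
  note SP[measurable] = S_plus_meas[OF X] and SM[measurable] = S_minus_meas[OF X]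
  define A where "A = (\<lambda>k. {\<omega>\<in>space M. S_plus (I \<omega>) \<le> enat k \<and> enat l \<le> S_minus (I \<omega>)})"
  define B where "B = (\<lambda>k. {\<omega>\<in>space M. enat l \<le> S_plus (I \<omega>) \<and> S_plus (I \<omega>) \<le> enat (k + l)})"
  have AB: "measure M (A k) = measure M (B k)" for k
    unfolding A_def B_def by (rule core_key[OF M X pm good l])
  have Am[measurable]: "A k \<in> sets M" for k unfolding A_def by measurable
  have Bm[measurable]: "B k \<in> sets M" for k unfolding B_def by measurable
  show ?thesis
  proof (cases k)
    case 0
    have "{\<omega>\<in>space M. S_plus (I \<omega>) = enat k \<and> S_minus (I \<omega>) \<ge> enat l} = A 0"
      unfolding A_def using 0 by (auto simp: zero_enat_def[symmetric])
    moreover have "{\<omega>\<in>space M. S_plus (I \<omega>) = enat (k + l)} = B 0"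
      unfolding B_def using 0 by (auto intro: antisym)
    ultimately show ?thesis using AB by simp
  next
    case (Suc k')
    have "{\<omega>\<in>space M. S_plus (I \<omega>) = enat k \<and> S_minus (I \<omega>) \<ge> enat l} = A (Suc k') - A k'"
      unfolding A_def using Suc enat_Suc_split by auto
    moreover have "{\<omega>\<in>space M. S_plus (I \<omega>) = enat (k + l)} = B (Suc k') - B k'"
      unfolding B_def using Suc enat_Suc_split[of _ "k' + l"] by (auto intro: order_trans)
    moreover have "A k' \<subseteq> A (Suc k')" unfolding A_def by (auto intro: order_trans)
    moreover have "B k' \<subseteq> B (Suc k')" unfolding B_def by (auto intro: order_trans)
    ultimately show ?thesis
      using AB by (simp add: finite_measure_Diff)
  qed
qed


lemma space_path[simp]: "space path_space = UNIV"
  by (simp add: path_space_def space_PiM)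

lemma path_meas:
  assumes "\<And>t. (\<lambda>\<omega>. X \<omega> t) \<in> measurable N (count_space UNIV)"
  shows "X \<in> measurable N path_space"
proof -
  have "(\<lambda>\<omega> i. X \<omega> i) \<in> measurable N path_space"
    unfolding path_space_def by (rule measurable_PiM_single') (use assms in auto)
  then show ?thesis by simp
qed

lemma stat_window:
  assumes st: "stationary_process N J" and W: "finite W"
  shows "measure N {\<omega>\<in>space N. \<forall>t\<in>W. J \<omega> (t + s) = y t} = measure N {\<omega>\<in>space N. \<forall>t\<in>W. J \<omega> t = y t}"
proof -
  have Jm: "\<And>t. (\<lambda>\<omega>. J \<omega> t) \<in> measurable N (count_space UNIV)"
    and eq: "distr N path_space (\<lambda>\<omega> t. J \<omega> (t + s)) = distr N path_space J"
    using st unfolding stationary_process_def by auto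
  have m1: "J \<in> measurable N path_space" by (rule path_meas[OF Jm])
  have m2: "(\<lambda>\<omega> t. J \<omega> (t + s)) \<in> measurable N path_space" by (rule path_meas) (use Jm in simp)
  define C where "C = {f\<in>space path_space. \<forall>t\<in>W. f t = y t}"
  have C: "C \<in> sets path_space"
  proof -
    note W[measurable]
    show ?thesis unfolding C_def path_space_def by measurable
  qed
  have "measure N {\<omega>\<in>space N. \<forall>t\<in>W. J \<omega> (t + s) = y t} = measure (distr N path_space (\<lambda>\<omega> t. J \<omega> (t + s))) C"
    by (subst measure_distr[OF m2 C]) (use m2 in \<open>auto simp: C_def measurable_space intro!: arg_cong[where f="measure N"]\<close>)
  also have "\<dots> = measure (distr N path_space J) C" by (simp add: eq)
  also have "\<dots> = measure N {\<omega>\<in>space N. \<forall>t\<in>W. J \<omega> t = y t}"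
    by (subst measure_distr[OF m1 C]) (use m1 in \<open>auto simp: C_def measurable_space intro!: arg_cong[where f="measure N"]\<close>)
  finally show ?thesis .
qed


lemma shift_all: "(\<forall>t\<in>{a-s..b-s}. P (t + s)) \<longleftrightarrow> (\<forall>t\<in>{a..b::int}. P t)"
proof
  assume H: "\<forall>t\<in>{a-s..b-s}. P (t + s)"
  show "\<forall>t\<in>{a..b}. P t"
  proof
    fix t assume "t \<in> {a..b}"
    then have "t - s \<in> {a-s..b-s}" by auto
    then have "P (t - s + s)" using H by blast
    then show "P t" by simp
  qed
next
  assume H: "\<forall>t\<in>{a..b}. P t"
  show "\<forall>t\<in>{a-s..b-s}. P (t + s)"
  proof
    fix t assume "t \<in> {a-s..b-s}"
    then have "t + s \<in> {a..b}" by auto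
    then show "P (t + s)" using H by blast
  qed
qed

context
  fixes M :: "'a measure" and I :: "'a \<Rightarrow> int \<Rightarrow> nat"
    and N :: "nat \<Rightarrow> 'b measure" and J :: "nat \<Rightarrow> 'b \<Rightarrow> int \<Rightarrow> nat"
  assumes M: "prob_space M"
    and I_meas: "\<And>t. (\<lambda>\<omega>. I \<omega> t) \<in> measurable M (count_space UNIV)"
    and N: "\<And>n. prob_space (N n)"
    and J01: "\<And>n \<omega> t. \<omega> \<in> space (N n) \<Longrightarrow> J n \<omega> t \<in> {0, 1}"
    and J_stat: "\<And>n. stationary_process (N n) (J n)"
    and J_pos: "\<And>n. measure (N n) {\<omega> \<in> space (N n). J n \<omega> 0 = 1} > 0"
    and conv: "\<And>(u::nat) (v::nat) (x::int \<Rightarrow> nat).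
      (\<lambda>n. measure (N n) {\<omega> \<in> space (N n). J n \<omega> 0 = 1 \<and> (\<forall>t\<in>{- int u..int v}. J n \<omega> t = x t)}
            / measure (N n) {\<omega> \<in> space (N n). J n \<omega> 0 = 1})
      \<longlonglongrightarrow> measure M {\<omega> \<in> space M. \<forall>t\<in>{- int u..int v}. I \<omega> t = x t}"
begin

lemma conv_ab:
  assumes "a \<le> 0" "0 \<le> b"
  shows "(\<lambda>n. measure (N n) {\<omega> \<in> space (N n). J n \<omega> 0 = 1 \<and> (\<forall>t\<in>{a..b}. J n \<omega> t = x t)}
            / measure (N n) {\<omega> \<in> space (N n). J n \<omega> 0 = 1})
      \<longlonglongrightarrow> measure M {\<omega> \<in> space M. \<forall>t\<in>{a..b}. I \<omega> t = x t}"
proof -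
  have e: "{- int (nat (-a))..int (nat b)} = {a..b}" using assms by simp
  show ?thesis using conv[of "nat (-a)" "nat b" x] unfolding e .
qed

lemma hyp_palm: "palm M I"
  unfolding palm_def
proof (intro allI impI)
  fix a b s :: int and x :: "int \<Rightarrow> nat"
  assume h: "a \<le> 0" "0 \<le> b" "a \<le> s" "s \<le> b" "x 0 = 1" "x s = 1"
  let ?p = "\<lambda>n. measure (N n) {\<omega> \<in> space (N n). J n \<omega> 0 = 1}"
  have lim1: "(\<lambda>n. measure (N n) {\<omega> \<in> space (N n). J n \<omega> 0 = 1 \<and> (\<forall>t\<in>{a..b}. J n \<omega> t = x t)} / ?p n)
      \<longlonglongrightarrow> measure M {\<omega> \<in> space M. \<forall>t\<in>{a..b}. I \<omega> t = x t}"
    by (rule conv_ab) (use h in auto)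
  have lim2: "(\<lambda>n. measure (N n) {\<omega> \<in> space (N n). J n \<omega> 0 = 1 \<and> (\<forall>t\<in>{a-s..b-s}. J n \<omega> t = x (t + s))} / ?p n)
      \<longlonglongrightarrow> measure M {\<omega> \<in> space M. \<forall>t\<in>{a-s..b-s}. I \<omega> t = x (t + s)}"
    by (rule conv_ab) (use h in auto)
  have eqn: "measure (N n) {\<omega> \<in> space (N n). J n \<omega> 0 = 1 \<and> (\<forall>t\<in>{a..b}. J n \<omega> t = x t)} =
     measure (N n) {\<omega> \<in> space (N n). J n \<omega> 0 = 1 \<and> (\<forall>t\<in>{a-s..b-s}. J n \<omega> t = x (t + s))}" for n
  proof -
    have "{\<omega> \<in> space (N n). J n \<omega> 0 = 1 \<and> (\<forall>t\<in>{a..b}. J n \<omega> t = x t)} =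
        {\<omega> \<in> space (N n). \<forall>t\<in>{a-s..b-s}. J n \<omega> (t + s) = x (t + s)}"
      using h shift_all[where P="\<lambda>t. J n _ t = x t" and a=a and s=s and b=b] by auto
    moreover have "{\<omega> \<in> space (N n). J n \<omega> 0 = 1 \<and> (\<forall>t\<in>{a-s..b-s}. J n \<omega> t = x (t + s))} =
        {\<omega> \<in> space (N n). \<forall>t\<in>{a-s..b-s}. J n \<omega> t = x (t + s)}"
      using h by auto
    ultimately show ?thesis
      using stat_window[OF J_stat[of n], where W="{a-s..b-s}" and s=s and y="\<lambda>t. x (t + s)"] by simp
  qed
  have "measure M {\<omega> \<in> space M. \<forall>t\<in>{a..b}. I \<omega> t = x t} =
     measure M {\<omega> \<in> space M. \<forall>t\<in>{a-s..b-s}. I \<omega> t = x (t + s)}"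
    using lim1 lim2 unfolding eqn by (rule LIMSEQ_unique)
  also have "{\<omega> \<in> space M. \<forall>t\<in>{a-s..b-s}. I \<omega> t = x (t + s)} = {\<omega> \<in> space M. \<forall>t\<in>{a..b}. I \<omega> (t - s) = x t}"
    using shift_all[where P="\<lambda>t. I _ (t - s) = x t" and a=a and s=s and b=b] by simp
  finally show "measure M {\<omega> \<in> space M. \<forall>t\<in>{a..b}. I \<omega> t = x t} =
     measure M {\<omega> \<in> space M. \<forall>t\<in>{a..b}. I \<omega> (t - s) = x t}" .
qed


lemma hyp_good_m:
  "measure M {\<omega>\<in>space M. I \<omega> 0 = 1 \<and> (\<forall>t\<in>{-int m..int m}. I \<omega> t \<le> 1)} = 1"
proof -
  let ?W = "{-int m..int m}"
  define \<Phi> where "\<Phi> = (\<lambda>f::int\<Rightarrow>nat. f 0 = 1 \<and> (\<forall>t\<in>?W. f t \<le> 1))"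
  let ?p = "\<lambda>n. measure (N n) {\<omega> \<in> space (N n). J n \<omega> 0 = 1}"
  have dep: "\<And>f g. (\<forall>t\<in>?W. f t = g t) \<Longrightarrow> \<Phi> f = \<Phi> g"
    unfolding \<Phi>_def by (metis atLeastAtMost_iff neg_le_0_iff_le of_nat_0_le_iff)
  have bnd: "\<And>f t. \<Phi> f \<Longrightarrow> t \<in> ?W \<Longrightarrow> f t \<le> 1" unfolding \<Phi>_def by auto
  have finM: "finite_measure M" using M by (simp add: prob_space_def)
  have D: "measure M {\<omega>\<in>space M. \<Phi> (I \<omega>)} =
     (\<Sum>x\<in>pats ?W \<Phi>. measure M {\<omega>\<in>space M. \<forall>t\<in>?W. I \<omega> t = x t})"
    by (rule decomp[OF finM I_meas]) (use dep bnd in auto)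
  have lim: "(\<lambda>n. \<Sum>x\<in>pats ?W \<Phi>. measure (N n) {\<omega> \<in> space (N n). J n \<omega> 0 = 1 \<and> (\<forall>t\<in>?W. J n \<omega> t = x t)} / ?p n)
     \<longlonglongrightarrow> (\<Sum>x\<in>pats ?W \<Phi>. measure M {\<omega>\<in>space M. \<forall>t\<in>?W. I \<omega> t = x t})"
    by (intro tendsto_sum conv)
  have one: "(\<Sum>x\<in>pats ?W \<Phi>. measure (N n) {\<omega> \<in> space (N n). J n \<omega> 0 = 1 \<and> (\<forall>t\<in>?W. J n \<omega> t = x t)} / ?p n) = 1" for n
  proof -
    have Jm: "\<And>t. (\<lambda>\<omega>. J n \<omega> t) \<in> measurable (N n) (count_space UNIV)"
      using J_stat[of n] unfolding stationary_process_def by auto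
    have finN: "finite_measure (N n)" using N[of n] by (simp add: prob_space_def)
    have "(\<Sum>x\<in>pats ?W \<Phi>. measure (N n) {\<omega> \<in> space (N n). J n \<omega> 0 = 1 \<and> (\<forall>t\<in>?W. J n \<omega> t = x t)} / ?p n)
       = (\<Sum>x\<in>pats ?W \<Phi>. measure (N n) {\<omega> \<in> space (N n). \<forall>t\<in>?W. J n \<omega> t = x t}) / ?p n"
      unfolding sum_divide_distrib
    proof (intro sum.cong refl arg_cong2[where f="(/)"] arg_cong[where f="measure (N n)"])
      fix x assume "x \<in> pats ?W \<Phi>"
      then have "x 0 = 1" by (simp add: pats_def \<Phi>_def)
      then show "{\<omega> \<in> space (N n). J n \<omega> 0 = 1 \<and> (\<forall>t\<in>?W. J n \<omega> t = x t)} = {\<omega> \<in> space (N n). \<forall>t\<in>?W. J n \<omega> t = x t}"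
        by auto
    qed
    also have "(\<Sum>x\<in>pats ?W \<Phi>. measure (N n) {\<omega> \<in> space (N n). \<forall>t\<in>?W. J n \<omega> t = x t}) = measure (N n) {\<omega>\<in>space (N n). \<Phi> (J n \<omega>)}"
      by (rule decomp[OF finN Jm, symmetric]) (use dep bnd in auto)
    also have "{\<omega>\<in>space (N n). \<Phi> (J n \<omega>)} = {\<omega> \<in> space (N n). J n \<omega> 0 = 1}"
    proof -
      have "J n \<omega> t \<le> 1" if "\<omega> \<in> space (N n)" for \<omega> t
        using J01[OF that, of t] by auto
      then show ?thesis unfolding \<Phi>_def by auto
    qed
    finally show ?thesis using J_pos[of n] by simp
  qed
  have "measure M {\<omega>\<in>space M. \<Phi> (I \<omega>)} = 1"
    using lim unfolding one D[symmetric] by (simp add: LIMSEQ_const_iff)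
  then show ?thesis unfolding \<Phi>_def .
qed

lemma hyp_good: "AE \<omega> in M. I \<omega> 0 = 1 \<and> (\<forall>t. I \<omega> t \<le> 1)"
proof -
  interpret prob_space M by (rule M)
  have "AE \<omega> in M. \<forall>m. \<omega> \<in> {\<omega>\<in>space M. I \<omega> 0 = 1 \<and> (\<forall>t\<in>{-int m..int m}. I \<omega> t \<le> 1)}"
    unfolding AE_all_countable using hyp_good_m by (intro allI AE_prob_1)
  then show ?thesis
  proof eventually_elim
    case (elim \<omega>)
    have "I \<omega> t \<le> 1" for t
    proof -
      have "t \<in> {-int (nat \<bar>t\<bar>)..int (nat \<bar>t\<bar>)}" by auto
      then show ?thesis using elim[rule_format, of "nat \<bar>t\<bar>"] by blast
    qed
    then show ?case using elim by auto
  qed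
qed

end


lemma pair_meas:
  fixes f :: "'a \<Rightarrow> 'c::countable" and g :: "'a \<Rightarrow> 'd::countable"
  assumes f: "f \<in> measurable M (count_space UNIV)" and g: "g \<in> measurable M (count_space UNIV)"
  shows "(\<lambda>\<omega>. (f \<omega>, g \<omega>)) \<in> measurable M (count_space UNIV)"
  unfolding measurable_count_space_eq2_countable
proof (intro conjI ballI)
  fix p :: "'c \<times> 'd"
  obtain a b where p: "p = (a, b)" by (cases p)
  have "(\<lambda>\<omega>. (f \<omega>, g \<omega>)) -` {p} \<inter> space M = (f -` {a} \<inter> space M) \<inter> (g -` {b} \<inter> space M)"
    using p by auto
  also have "\<dots> \<in> sets M" using f g by (intro sets.Int measurable_sets) auto
  finally show "(\<lambda>\<omega>. (f \<omega>, g \<omega>)) -` {p} \<inter> space M \<in> sets M" .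
qed auto

lemma enat_ge_split: "(enat l \<le> e \<and> \<not> enat (Suc l) \<le> e) \<longleftrightarrow> e = enat l"
  by (cases e) auto

lemma lim_zero_le:
  fixes x :: real
  assumes "0 \<le> x" "\<And>L. x \<le> h L" "h \<longlonglongrightarrow> 0"
  shows "x = 0"
proof -
  have "x \<le> 0" using assms(3) by (rule LIMSEQ_le_const) (use assms(2) in auto)
  then show ?thesis using assms(1) by simp
qed

theorem theorem3p2:
  fixes M :: "'a measure" and I :: "'a \<Rightarrow> int \<Rightarrow> nat"
    and N :: "nat \<Rightarrow> 'b measure" and J :: "nat \<Rightarrow> 'b \<Rightarrow> int \<Rightarrow> nat"
  assumes M: "prob_space M"
    and I_meas: "\<And>t. (\<lambda>\<omega>. I \<omega> t) \<in> measurable M (count_space UNIV)"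
    and N: "\<And>n. prob_space (N n)"
    and J01: "\<And>n \<omega> t. \<omega> \<in> space (N n) \<Longrightarrow> J n \<omega> t \<in> {0, 1}"
    and J_stat: "\<And>n. stationary_process (N n) (J n)"
    and J_pos: "\<And>n. measure (N n) {\<omega> \<in> space (N n). J n \<omega> 0 = 1} > 0"
    and conv: "\<And>(u::nat) (v::nat) (x::int \<Rightarrow> nat).
      (\<lambda>n. measure (N n) {\<omega> \<in> space (N n). J n \<omega> 0 = 1 \<and> (\<forall>t\<in>{- int u..int v}. J n \<omega> t = x t)}
            / measure (N n) {\<omega> \<in> space (N n). J n \<omega> 0 = 1})
      \<longlonglongrightarrow> measure M {\<omega> \<in> space M. \<forall>t\<in>{- int u..int v}. I \<omega> t = x t}"
  shows "distr M (count_space UNIV) (\<lambda>\<omega>. (S_minus (I \<omega>), S_plus (I \<omega>)))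
           = distr M (count_space UNIV) (\<lambda>\<omega>. (S_plus (I \<omega>), S_minus (I \<omega>)))
       \<and> distr M (count_space UNIV) (\<lambda>\<omega>. S_minus (I \<omega>))
           = distr M (count_space UNIV) (\<lambda>\<omega>. S_plus (I \<omega>))
       \<and> (\<forall>k l :: nat.
           measure M {\<omega> \<in> space M. S_plus (I \<omega>) = enat k \<and> S_minus (I \<omega>) \<ge> enat l}
         = measure M {\<omega> \<in> space M. S_plus (I \<omega>) = enat (k + l)})
       \<and> (\<forall>k l :: nat.
           measure M {\<omega> \<in> space M. S_plus (I \<omega>) = enat k \<and> S_minus (I \<omega>) = enat l}
         = measure M {\<omega> \<in> space M. S_plus (I \<omega>) = enat (k + l)}
           - measure M {\<omega> \<in> space M. S_plus (I \<omega>) = enat (k + l + 1)})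
       \<and> (\<forall>k :: nat.
           measure M {\<omega> \<in> space M. S_plus (I \<omega>) = enat k}
         \<ge> measure M {\<omega> \<in> space M. S_plus (I \<omega>) = enat (k + 1)})"
proof -
  interpret prob_space M by (rule M)
  have pm: "palm M I" by (rule hyp_palm[OF M I_meas N J01 J_stat J_pos conv])
  have good: "AE \<omega> in M. I \<omega> 0 = 1 \<and> (\<forall>t. I \<omega> t \<le> 1)"
    by (rule hyp_good[OF M I_meas N J01 J_stat J_pos conv])
  define I' where "I' = (\<lambda>\<omega> t. I \<omega> (- t))"
  have X'[measurable]: "\<And>t. (\<lambda>\<omega>. I' \<omega> t) \<in> measurable M (count_space UNIV)"
    unfolding I'_def using I_meas by simp
  have pm': "palm M I'" unfolding I'_def by (rule palm_refl[OF pm])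
  have good': "AE \<omega> in M. I' \<omega> 0 = 1 \<and> (\<forall>t. I' \<omega> t \<le> 1)"
    using good by eventually_elim (auto simp: I'_def)
  have SI'1: "S_plus (I' \<omega>) = S_minus (I \<omega>)" for \<omega> unfolding I'_def S_minus_refl ..
  have SI'2: "S_minus (I' \<omega>) = S_plus (I \<omega>)" for \<omega> unfolding I'_def S_plus_refl[of "I \<omega>"] ..
  note X[measurable] = I_meas
  note SP[measurable] = S_plus_meas[OF I_meas] and SM[measurable] = S_minus_meas[OF I_meas]
  define f where "f = (\<lambda>m. measure M {\<omega> \<in> space M. S_plus (I \<omega>) = enat m})"
  define g where "g = (\<lambda>m. measure M {\<omega> \<in> space M. S_minus (I \<omega>) = enat m})"
  have P1: "measure M {\<omega> \<in> space M. S_plus (I \<omega>) = enat k \<and> S_minus (I \<omega>) \<ge> enat l} = f (k + l)" for k l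
    unfolding f_def by (rule core_P1[OF M I_meas pm good])
  have P1': "measure M {\<omega> \<in> space M. S_minus (I \<omega>) = enat k \<and> S_plus (I \<omega>) \<ge> enat l} = g (k + l)" for k l
    using core_P1[OF M X' pm' good', of k l] unfolding g_def SI'1 SI'2 .
  have P2: "measure M {\<omega> \<in> space M. S_plus (I \<omega>) = enat k \<and> S_minus (I \<omega>) = enat l} = f (k + l) - f (k + l + 1)" for k l
  proof -
    have "{\<omega> \<in> space M. S_plus (I \<omega>) = enat k \<and> S_minus (I \<omega>) = enat l} =
      {\<omega> \<in> space M. S_plus (I \<omega>) = enat k \<and> S_minus (I \<omega>) \<ge> enat l} - {\<omega> \<in> space M. S_plus (I \<omega>) = enat k \<and> S_minus (I \<omega>) \<ge> enat (Suc l)}"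
      using enat_ge_split[of l] by auto
    moreover have "{\<omega> \<in> space M. S_plus (I \<omega>) = enat k \<and> S_minus (I \<omega>) \<ge> enat (Suc l)} \<subseteq> {\<omega> \<in> space M. S_plus (I \<omega>) = enat k \<and> S_minus (I \<omega>) \<ge> enat l}"
      using order_trans[of "enat l" "enat (Suc l)"] by auto
    ultimately show ?thesis using P1[of k l] P1[of k "Suc l"] by (simp add: finite_measure_Diff)
  qed
  have P2': "measure M {\<omega> \<in> space M. S_minus (I \<omega>) = enat k \<and> S_plus (I \<omega>) = enat l} = g (k + l) - g (k + l + 1)" for k l
  proof -
    have "{\<omega> \<in> space M. S_minus (I \<omega>) = enat k \<and> S_plus (I \<omega>) = enat l} =
      {\<omega> \<in> space M. S_minus (I \<omega>) = enat k \<and> S_plus (I \<omega>) \<ge> enat l} - {\<omega> \<in> space M. S_minus (I \<omega>) = enat k \<and> S_plus (I \<omega>) \<ge> enat (Suc l)}"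
      using enat_ge_split[of l] by auto
    moreover have "{\<omega> \<in> space M. S_minus (I \<omega>) = enat k \<and> S_plus (I \<omega>) \<ge> enat (Suc l)} \<subseteq> {\<omega> \<in> space M. S_minus (I \<omega>) = enat k \<and> S_plus (I \<omega>) \<ge> enat l}"
      using order_trans[of "enat l" "enat (Suc l)"] by auto
    ultimately show ?thesis using P1'[of k l] P1'[of k "Suc l"] by (simp add: finite_measure_Diff)
  qed
  have fdiff: "f m - f (m + 1) = g m - g (m + 1)" for m
  proof -
    have "{\<omega> \<in> space M. S_plus (I \<omega>) = enat 0 \<and> S_minus (I \<omega>) = enat m} = {\<omega> \<in> space M. S_minus (I \<omega>) = enat m \<and> S_plus (I \<omega>) = enat 0}"
      by auto
    then show ?thesis using P2[of 0 m] P2'[of m 0] by simp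
  qed
  have tele: "f m - f (m + n) = g m - g (m + n)" for m n
  proof (induction n)
    case (Suc n)
    have "f m - f (m + Suc n) = (f m - f (m + n)) + (f (m + n) - f (m + n + 1))" by simp
    also have "\<dots> = (g m - g (m + n)) + (g (m + n) - g (m + n + 1))" using Suc fdiff by simp
    finally show ?case by simp
  qed simp
  have f0: "f \<longlonglongrightarrow> 0"
  proof -
    have "(\<lambda>m. measure M {\<omega> \<in> space M. S_plus (I \<omega>) = enat m}) sums measure M (\<Union>m. {\<omega> \<in> space M. S_plus (I \<omega>) = enat m})"
      by (rule finite_measure_UNION) (auto simp: disjoint_family_on_def)
    then show ?thesis unfolding f_def by (intro summable_LIMSEQ_zero) (rule sums_summable)
  qed
  have g0: "g \<longlonglongrightarrow> 0"
  proof -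
    have "(\<lambda>m. measure M {\<omega> \<in> space M. S_minus (I \<omega>) = enat m}) sums measure M (\<Union>m. {\<omega> \<in> space M. S_minus (I \<omega>) = enat m})"
      by (rule finite_measure_UNION) (auto simp: disjoint_family_on_def)
    then show ?thesis unfolding g_def by (intro summable_LIMSEQ_zero) (rule sums_summable)
  qed
  have fshift: "(\<lambda>n. f (m + n)) \<longlonglongrightarrow> 0" for m
    using LIMSEQ_ignore_initial_segment[OF f0, of m] by (simp add: add.commute)
  have gshift: "(\<lambda>n. g (m + n)) \<longlonglongrightarrow> 0" for m
    using LIMSEQ_ignore_initial_segment[OF g0, of m] by (simp add: add.commute)
  have fg: "f m = g m" for m
  proof -
    have "(\<lambda>n. f m - f (m + n)) \<longlonglongrightarrow> f m - 0" by (intro tendsto_intros fshift)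
    moreover have "(\<lambda>n. f m - f (m + n)) \<longlonglongrightarrow> g m - 0" unfolding tele by (intro tendsto_intros gshift)
    ultimately show ?thesis using LIMSEQ_unique by fastforce
  qed
  define J2 where "J2 = (\<lambda>a b. measure M {\<omega> \<in> space M. S_plus (I \<omega>) = a \<and> S_minus (I \<omega>) = b})"
  have J2_inf1: "J2 (enat a) \<infinity> = 0" for a
  proof (rule lim_zero_le)
    show "0 \<le> J2 (enat a) \<infinity>" unfolding J2_def by simp
    show "J2 (enat a) \<infinity> \<le> f (a + L)" for L
      unfolding J2_def P1[symmetric] by (rule finite_measure_mono) auto
    show "(\<lambda>L. f (a + L)) \<longlonglongrightarrow> 0" by (rule fshift)
  qed
  have J2_inf2: "J2 \<infinity> (enat a) = 0" for a
  proof (rule lim_zero_le)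
    show "0 \<le> J2 \<infinity> (enat a)" unfolding J2_def by simp
    show "J2 \<infinity> (enat a) \<le> f (a + L)" for L
      unfolding J2_def fg P1'[symmetric] by (rule finite_measure_mono) auto
    show "(\<lambda>L. f (a + L)) \<longlonglongrightarrow> 0" by (rule fshift)
  qed
  have J2sym: "J2 a b = J2 b a" for a b
  proof (cases a)
    case (enat a')
    then show ?thesis
    proof (cases b)
      case (enat b')
      then show ?thesis using \<open>a = enat a'\<close> P2[of a' b'] P2[of b' a'] unfolding J2_def by (simp add: add.commute)
    next
      case infinity
      then show ?thesis using \<open>a = enat a'\<close> J2_inf1 J2_inf2 by simp
    qed
  next
    case infinity
    then show ?thesis
    proof (cases b)
      case (enat b')
      then show ?thesis using \<open>a = \<infinity>\<close> J2_inf1 J2_inf2 by simp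
    qed simp
  qed
  have pm1: "(\<lambda>\<omega>. (S_minus (I \<omega>), S_plus (I \<omega>))) \<in> measurable M (count_space UNIV)"
    by (rule pair_meas[OF SM SP])
  have pm2: "(\<lambda>\<omega>. (S_plus (I \<omega>), S_minus (I \<omega>))) \<in> measurable M (count_space UNIV)"
    by (rule pair_meas[OF SP SM])
  have joint: "distr M (count_space UNIV) (\<lambda>\<omega>. (S_minus (I \<omega>), S_plus (I \<omega>)))
           = distr M (count_space UNIV) (\<lambda>\<omega>. (S_plus (I \<omega>), S_minus (I \<omega>)))"
  proof (rule measure_eqI_countable[where A=UNIV])
    fix p :: "enat \<times> enat"
    obtain a b where p: "p = (a, b)" by (cases p)
    have "emeasure (distr M (count_space UNIV) (\<lambda>\<omega>. (S_minus (I \<omega>), S_plus (I \<omega>)))) {p} = ennreal (J2 b a)"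
    proof -
      have "(\<lambda>\<omega>. (S_minus (I \<omega>), S_plus (I \<omega>))) -` {p} \<inter> space M = {\<omega>\<in>space M. S_plus (I \<omega>) = b \<and> S_minus (I \<omega>) = a}" using p by auto
      then show ?thesis unfolding J2_def
        by (subst emeasure_distr[OF pm1]) (auto simp: emeasure_eq_measure)
    qed
    moreover have "emeasure (distr M (count_space UNIV) (\<lambda>\<omega>. (S_plus (I \<omega>), S_minus (I \<omega>)))) {p} = ennreal (J2 a b)"
    proof -
      have "(\<lambda>\<omega>. (S_plus (I \<omega>), S_minus (I \<omega>))) -` {p} \<inter> space M = {\<omega>\<in>space M. S_plus (I \<omega>) = a \<and> S_minus (I \<omega>) = b}" using p by auto
      then show ?thesis unfolding J2_def
        by (subst emeasure_distr[OF pm2]) (auto simp: emeasure_eq_measure)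
    qed
    ultimately show "emeasure (distr M (count_space UNIV) (\<lambda>\<omega>. (S_minus (I \<omega>), S_plus (I \<omega>)))) {p} =
       emeasure (distr M (count_space UNIV) (\<lambda>\<omega>. (S_plus (I \<omega>), S_minus (I \<omega>)))) {p}"
      using J2sym by simp
  qed auto
  have marg: "distr M (count_space UNIV) (\<lambda>\<omega>. S_minus (I \<omega>)) = distr M (count_space UNIV) (\<lambda>\<omega>. S_plus (I \<omega>))"
  proof -
    have fstm: "fst \<in> measurable (count_space UNIV) (count_space (UNIV :: enat set))" by simp
    have "distr M (count_space UNIV) (\<lambda>\<omega>. S_minus (I \<omega>)) =
        distr (distr M (count_space UNIV) (\<lambda>\<omega>. (S_minus (I \<omega>), S_plus (I \<omega>)))) (count_space UNIV) fst"
      by (subst distr_distr[OF fstm pm1]) (simp add: comp_def)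
    also have "\<dots> = distr (distr M (count_space UNIV) (\<lambda>\<omega>. (S_plus (I \<omega>), S_minus (I \<omega>)))) (count_space UNIV) fst"
      unfolding joint ..
    also have "\<dots> = distr M (count_space UNIV) (\<lambda>\<omega>. S_plus (I \<omega>))"
      by (subst distr_distr[OF fstm pm2]) (simp add: comp_def)
    finally show ?thesis .
  qed
  have mono: "f k \<ge> f (k + 1)" for k
  proof -
    have "0 \<le> measure M {\<omega> \<in> space M. S_plus (I \<omega>) = enat k \<and> S_minus (I \<omega>) = enat 0}" by simp
    then show ?thesis using P2[of k 0] by simp
  qed
  show ?thesis
    using joint marg P1 P2 mono unfolding f_def by auto
qed

end
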